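(* Let $1\le k\le n$, let $\lambda=(\lambda_1,\ldots,\lambda_k)$ with $n-k\ge\lambda_1\ge\cdots\ge\lambda_k\ge0$, set $\lambda_{k+1}=0$, and let $D_\lambda$ be the weighted digraph with sources $e_1,\ldots,e_k$ and sinks $v_1,\ldots,v_k$ described in the context. For integers $C_1,\ldots,C_k$ with $0\le C_i\le\lambda_i$, let $\mathbf P(C)=(p_{11},\ldots,p_{kk})$, where $p_{ii}$ is the unique path in $D_\lambda$ from $e_i$ to $v_i$ whose only diagonal edge is the diagonal edge of row $i$ with label $C_i$. Then: (i) the paths $p_{11},\ldots,p_{kk}$ are pairwise vertex-disjoint if and only if $C_1\ge C_2\ge\cdots\ge C_k$; (ii) if $C_1\ge\cdots\ge C_k$, so that $(C_1,\ldots,C_k)$ describes a Catalan path $C$ constrained by the Young diagram of shape $\lambda$ in the $k\times(n-k)$ rectangle, then $\mathrm{pwt}(C)=(1/\alpha)^{\,n-k-\lambda_1}\,\mathrm{wt}(\mathbf P(C))$, where $\mathrm{wt}(\mathbf P(C))=\prod_{i=1}^k\mathrm{wt}(p_{ii})$.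
   Context: Digraph $D_\lambda$: vertices are points $(x,r)\in\mathbb Z^2$. For each row $i\in\{1,\ldots,k\}$ (a row of $\lambda_i$ parallelograms between horizontal lines $r=i-1$ and $r=i$): top vertices $(x,i-1)$ for $0\le x\le\lambda_i$, bottom vertices $(x,i)$ for $1\le x\le\lambda_i+1$; horizontal edges $(x,i-1)\to(x+1,i-1)$ for $0\le x<\lambda_i$ and $(x,i)\to(x+1,i)$ for $1\le x\le\lambda_i$; diagonal (southeast) edges $(t,i-1)\to(t+1,i)$ for $0\le t\le\lambda_i$, the diagonal edge with this $t$ having label $t$. Coinciding vertices/edges of consecutive rows are identified. Sources $e_i=(0,i-1)$, sinks $v_i=(\lambda_i+1,i)$. Weights: a diagonal edge of label $0$ has weight $1/\beta$; a diagonal edge of row $i$ with label $t>\lambda_{i+1}$ has weight $(1/\alpha)^{t-\lambda_{i+1}}$; all other edges have weight $1$. The weight of a path is the product of its edge weights. Catalan path constrained by $Y$ (Young diagram of shape $\lambda$ in the $k\times(n-k)$ rectangle, NW-justified, rows numbered top to bottom, vertical grid lines labelled $0,\ldots,n-k$ left to right): a south/west unit-step lattice path from the NE to the SW corner of the rectangle never crossing the southeast border of $Y$; it is encoded by $C_1\ge\cdots\ge C_k\ge0$, $C_i\le\lambda_i$, where $C_i$ is the grid-line label of its south step in row $i$. Let $L$ be the lattice path from the NE to the SW corner following the southeast border of $Y$. Edge weights: a south step with $C_i=0$ (on the west border of the rectangle) has weight $1/\beta$, other south steps weight $1$; a west step lying on $L$ has weight $1/\alpha$, other west steps weight $1$.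 $\mathrm{pwt}(C)$ is the product of these edge weights. *)

theory Defs
  imports Main
begin

definition lamx :: "nat \<Rightarrow> (nat \<Rightarrow> nat) \<Rightarrow> nat \<Rightarrow> nat" where
  "lamx k lam i = (if 1 \<le> i \<and> i \<le> k then lam i else 0)"

(* edges of the digraph D_lambda; vertices are points (x, r) of Z^2;
   coinciding edges of consecutive rows are identified automatically (set of pairs) *)
definition D_edges :: "nat \<Rightarrow> (nat \<Rightarrow> nat) \<Rightarrow> ((int \<times> int) \<times> (int \<times> int)) set" where
  "D_edges k lam =
     {((x, int i - 1), (x + 1, int i - 1)) | i x. 1 \<le> i \<and> i \<le> k \<and> 0 \<le> x \<and> x < int (lam i)}
   \<union> {((x, int i), (x + 1, int i)) | i x. 1 \<le> i \<and> i \<le> k \<and> 1 \<le> x \<and> x \<le> int (lam i)}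
   \<union> {((t, int i - 1), (t + 1, int i)) | i t. 1 \<le> i \<and> i \<le> k \<and> 0 \<le> t \<and> t \<le> int (lam i)}"

definition is_diag :: "(int \<times> int) \<times> (int \<times> int) \<Rightarrow> bool" where
  "is_diag e = (snd (snd e) = snd (fst e) + 1)"

definition diag_edge :: "nat \<Rightarrow> nat \<Rightarrow> (int \<times> int) \<times> (int \<times> int)" where
  "diag_edge i c = ((int c, int i - 1), (int c + 1, int i))"

(* edge weights: a diagonal edge from (t, i-1) to (t+1, i) lies in row i and has label t *)
definition D_wt :: "nat \<Rightarrow> (nat \<Rightarrow> nat) \<Rightarrow> 'a::field \<Rightarrow> 'a \<Rightarrow> (int \<times> int) \<times> (int \<times> int) \<Rightarrow> 'a" where
  "D_wt k lam \<alpha> \<beta> e =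
     (if is_diag e then
        (let t = fst (fst e); i = nat (snd (snd e)) in
         if t = 0 then 1 / \<beta>
         else if t > int (lamx k lam (Suc i)) then (1 / \<alpha>) ^ nat (t - int (lamx k lam (Suc i)))
         else 1)
      else 1)"

definition source :: "nat \<Rightarrow> int \<times> int" where
  "source i = (0, int i - 1)"

definition sink :: "(nat \<Rightarrow> nat) \<Rightarrow> nat \<Rightarrow> int \<times> int" where
  "sink lam i = (int (lam i) + 1, int i)"

definition is_path :: "((int \<times> int) \<times> (int \<times> int)) set \<Rightarrow> (int \<times> int) list \<Rightarrow> int \<times> int \<Rightarrow> int \<times> int \<Rightarrow> bool" where
  "is_path E ps a b = (ps \<noteq> [] \<and> hd ps = a \<and> last ps = b \<and> set (zip ps (tl ps)) \<subseteq> E)"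

definition Ppath :: "nat \<Rightarrow> (nat \<Rightarrow> nat) \<Rightarrow> (nat \<Rightarrow> nat) \<Rightarrow> nat \<Rightarrow> (int \<times> int) list" where
  "Ppath k lam C i = (THE ps. is_path (D_edges k lam) ps (source i) (sink lam i)
        \<and> {e \<in> set (zip ps (tl ps)). is_diag e} = {diag_edge i (C i)})"

definition path_wt :: "nat \<Rightarrow> (nat \<Rightarrow> nat) \<Rightarrow> 'a::field \<Rightarrow> 'a \<Rightarrow> (int \<times> int) list \<Rightarrow> 'a" where
  "path_wt k lam \<alpha> \<beta> ps = prod_list (map (D_wt k lam \<alpha> \<beta>) (zip ps (tl ps)))"

(* Catalan paths in the k x (n-k) rectangle: points (x, j), x = vertical grid line label
   (0..n-k, left to right), j = horizontal grid line (0 = top, k = bottom).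
   Encoding c_1 >= ... >= c_k extended by c_0 = n-k, c_{k+1} = 0. *)
definition cext :: "nat \<Rightarrow> nat \<Rightarrow> (nat \<Rightarrow> nat) \<Rightarrow> nat \<Rightarrow> nat" where
  "cext n k c j = (if j = 0 then n - k else if j \<le> k then c j else 0)"

(* unit steps of the lattice path from NE corner (n-k,0) to SW corner (0,k):
   south step of row i at grid line c_i, then west steps along line j from c_j to c_{j+1} *)
definition lattice_path :: "nat \<Rightarrow> nat \<Rightarrow> (nat \<Rightarrow> nat) \<Rightarrow> ((int \<times> int) \<times> (int \<times> int)) set" where
  "lattice_path n k c =
     {((int (c i), int i - 1), (int (c i), int i)) | i. 1 \<le> i \<and> i \<le> k}
   \<union> {((x, int j), (x - 1, int j)) | j x. j \<le> k \<and> int (cext n k c (Suc j)) < x \<and> x \<le> int (cext n k c j)}"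

(* L = southeast border of Y is the lattice path encoded by lambda itself *)
definition pwt :: "nat \<Rightarrow> nat \<Rightarrow> (nat \<Rightarrow> nat) \<Rightarrow> 'a::field \<Rightarrow> 'a \<Rightarrow> (nat \<Rightarrow> nat) \<Rightarrow> 'a" where
  "pwt n k lam \<alpha> \<beta> c =
     (\<Prod>e \<in> lattice_path n k c.
        if fst (fst e) = fst (snd e) then (if fst (fst e) = 0 then 1 / \<beta> else 1)
        else if e \<in> lattice_path n k lam then 1 / \<alpha> else 1)"

end

theory Submission imports Defs begin
definition yc :: "nat \<Rightarrow> nat \<Rightarrow> nat \<Rightarrow> int" where
  "yc c i m = (if m \<le> c then int i - 1 else int i)"

definition PP :: "nat \<Rightarrow> nat \<Rightarrow> nat \<Rightarrow> (int \<times> int) list" where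
  "PP l c i = map (\<lambda>m. (int m, yc c i m)) [0..<l + 2]"

lemma set_zip_tl: "set (zip ps (tl ps)) = {(ps!m, ps!Suc m) | m. Suc m < length ps}"
  by (auto simp: set_zip nth_tl)

lemma edge_form: "e \<in> D_edges k lam \<Longrightarrow>
   fst (snd e) = fst (fst e) + 1 \<and> (snd (snd e) = snd (fst e) \<or> snd (snd e) = snd (fst e) + 1)"
  unfolding D_edges_def by auto

lemma uniq:
  assumes p: "is_path (D_edges k lam) ps (source i) (sink lam i)"
    and d: "{e \<in> set (zip ps (tl ps)). is_diag e} = {diag_edge i c}"
  shows "ps = PP (lam i) c i"
proof -
  have ne: "ps \<noteq> []" and h: "hd ps = source i" and l: "last ps = sink lam i"
    and sub: "set (zip ps (tl ps)) \<subseteq> D_edges k lam" using p unfolding is_path_def by auto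
  have E: "(ps!m, ps!Suc m) \<in> D_edges k lam" if "Suc m < length ps" for m
    using sub that unfolding set_zip_tl by blast
  have h0: "ps!0 = (0, int i - 1)" using h ne by (simp add: hd_conv_nth source_def)
  have X: "m < length ps \<longrightarrow> fst (ps!m) = int m" for m
  proof (induction m)
    case 0 then show ?case using h0 by simp
  next
    case (Suc m) then show ?case using edge_form[OF E[of m]] by auto
  qed
  have "diag_edge i c \<in> set (zip ps (tl ps))" using d by blast
  then obtain m' where m': "Suc m' < length ps" "(ps!m', ps!Suc m') = diag_edge i c"
    unfolding set_zip_tl by auto
  have "m' = c" using X[of m'] m' by (auto simp: diag_edge_def)
  have D: "is_diag (ps!m, ps!Suc m) \<longleftrightarrow> m = c" if "Suc m < length ps" for m
  proof
    assume "is_diag (ps!m, ps!Suc m)"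
    then have "(ps!m, ps!Suc m) \<in> {e \<in> set (zip ps (tl ps)). is_diag e}"
      using that unfolding set_zip_tl by blast
    then have "(ps!m, ps!Suc m) = diag_edge i c" using d by blast
    then show "m = c" using X[of m] that by (auto simp: diag_edge_def)
  next
    assume "m = c" then show "is_diag (ps!m, ps!Suc m)" using m' \<open>m' = c\<close>
      by (auto simp: diag_edge_def is_diag_def)
  qed
  have Y: "m < length ps \<longrightarrow> snd (ps!m) = yc c i m" for m
  proof (induction m)
    case 0 then show ?case using h0 by (simp add: yc_def)
  next
    case (Suc m)
    show ?case
    proof
      assume a: "Suc m < length ps"
      have ef: "snd (ps ! Suc m) = snd (ps!m) \<or> snd (ps ! Suc m) = snd (ps!m) + 1"
        using edge_form[OF E[OF a]] by auto
      show "snd (ps!Suc m) = yc c i (Suc m)"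
      proof (cases "m = c")
        case True
        then have "is_diag (ps!m, ps!Suc m)" using D a by blast
        then show ?thesis using Suc a True by (auto simp: is_diag_def yc_def)
      next
        case False
        then have "\<not> is_diag (ps!m, ps!Suc m)" using D a by blast
        then show ?thesis using Suc a False ef by (auto simp: is_diag_def yc_def)
      qed
    qed
  qed
  have "last ps = ps ! (length ps - 1)" using ne by (simp add: last_conv_nth)
  then have "fst (ps ! (length ps - 1)) = int (lam i) + 1" using l by (metis fst_conv sink_def)
  then have "int (length ps - 1) = int (lam i) + 1" using X[of "length ps - 1"] ne by simp
  then have len: "length ps = lam i + 2" by linarith
  show ?thesis
    by (rule nth_equalityI) (auto simp: PP_def len X Y prod_eq_iff simp del: upt_Suc)
qed

lemma PP_path:
  assumes "1 \<le> i" "i \<le> k" "c \<le> lam i"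
  shows "is_path (D_edges k lam) (PP (lam i) c i) (source i) (sink lam i)
        \<and> {e \<in> set (zip (PP (lam i) c i) (tl (PP (lam i) c i))). is_diag e} = {diag_edge i c}"
proof -
  let ?p = "PP (lam i) c i"
  have len: "length ?p = lam i + 2" by (simp add: PP_def)
  have nth: "m < lam i + 2 \<Longrightarrow> ?p ! m = (int m, yc c i m)" for m
    by (simp add: PP_def del: upt_Suc)
  have edges: "(?p!m, ?p!Suc m) \<in> D_edges k lam" if "Suc m < length ?p" for m
  proof -
    have m: "m \<le> lam i" using that len by simp
    consider "m < c" | "m = c" | "c < m" by linarith
    then show ?thesis
    proof cases
      case 1
      then show ?thesis using m assms that len unfolding D_edges_def
        by (auto simp: nth yc_def intro!: exI[of _ i])
    next
      case 2
      then show ?thesis using m assms that len unfolding D_edges_def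
        by (auto simp: nth yc_def intro!: exI[of _ i])
    next
      case 3
      then show ?thesis using m assms that len unfolding D_edges_def
        by (auto simp: nth yc_def intro!: exI[of _ i])
    qed
  qed
  have "is_path (D_edges k lam) ?p (source i) (sink lam i)"
    unfolding is_path_def
  proof (intro conjI)
    show "?p \<noteq> []" using len by auto
    show "hd ?p = source i" using len nth[of 0] by (cases ?p) (auto simp: source_def yc_def)
    have ne: "?p \<noteq> []" using len by auto
    have "?p ! (lam i + 1) = (int (lam i) + 1, int i)" using nth[of "lam i + 1"] assms
      by (simp add: yc_def)
    then show "last ?p = sink lam i" using len ne last_conv_nth[of ?p]
      by (simp add: sink_def)
    show "set (zip ?p (tl ?p)) \<subseteq> D_edges k lam" unfolding set_zip_tl using edges by blast
  qed
  moreover have "{e \<in> set (zip ?p (tl ?p)). is_diag e} = {diag_edge i c}"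
    unfolding set_zip_tl using len assms
    by (auto simp: nth is_diag_def yc_def diag_edge_def split: if_splits intro!: exI[of _ c])
  ultimately show ?thesis by blast
qed

lemma Ppath_eq:
  assumes "1 \<le> i" "i \<le> k" "C i \<le> lam i"
  shows "Ppath k lam C i = PP (lam i) (C i) i"
  unfolding Ppath_def
  by (rule the_equality) (use PP_path[of i k "C i" lam] assms uniq in auto)

lemma set_PP: "set (PP l c i) = (\<lambda>m. (int m, yc c i m)) ` {0..<l+2}"
  by (simp add: PP_def del: upt_Suc)

lemma disj_far:
  assumes "Suc i < j" "1 \<le> i"
  shows "set (PP l c i) \<inter> set (PP l' c' j) = {}"
  using assms unfolding set_PP by (auto simp: yc_def split: if_splits)

lemma disj_adj:
  assumes "1 \<le> i" "c' \<le> l'" "l' \<le> l"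
  shows "set (PP l c i) \<inter> set (PP l' c' (Suc i)) = {} \<longleftrightarrow> c' \<le> c"
proof
  assume a: "set (PP l c i) \<inter> set (PP l' c' (Suc i)) = {}"
  show "c' \<le> c"
  proof (rule ccontr)
    assume "\<not> c' \<le> c"
    then have "(int c', int i) \<in> set (PP l c i) \<inter> set (PP l' c' (Suc i))"
      using assms unfolding set_PP by (auto simp: yc_def image_iff intro!: bexI[of _ c'])
    then show False using a by blast
  qed
next
  assume "c' \<le> c" then show "set (PP l c i) \<inter> set (PP l' c' (Suc i)) = {}"
    using assms unfolding set_PP by (auto simp: yc_def split: if_splits)
qed

lemma zip_PP: "zip (PP l c i) (tl (PP l c i)) =
   map (\<lambda>m. ((int m, yc c i m), (int (Suc m), yc c i (Suc m)))) [0..<l+1]"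
  by (rule nth_equalityI) (auto simp: PP_def nth_tl simp del: upt_Suc)

lemma path_wt_PP:
  assumes "c \<le> l"
  shows "path_wt k lam \<alpha> \<beta> (PP l c i) = D_wt k lam \<alpha> \<beta> (diag_edge i c)"
proof -
  have "path_wt k lam \<alpha> \<beta> (PP l c i) =
     (\<Prod>m\<in>{0..<l+1}. D_wt k lam \<alpha> \<beta> ((int m, yc c i m), (int (Suc m), yc c i (Suc m))))"
    unfolding path_wt_def zip_PP
    by (simp add: prod.distinct_set_conv_list[symmetric] comp_def del: upt_Suc)
  also have "\<dots> = (\<Prod>m\<in>{0..<l+1}. if m = c then D_wt k lam \<alpha> \<beta> (diag_edge i c) else 1)"
    by (rule prod.cong) (auto simp: D_wt_def is_diag_def yc_def diag_edge_def)
  also have "\<dots> = D_wt k lam \<alpha> \<beta> (diag_edge i c)"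
    using assms by (simp add: prod.delta)
  finally show ?thesis .
qed

lemma D_wt_diag: "D_wt k lam \<alpha> \<beta> (diag_edge i c) =
   (if c = 0 then 1/\<beta> else if int c > int (lamx k lam (Suc i))
      then (1/\<alpha>) ^ nat (int c - int (lamx k lam (Suc i))) else 1)"
  by (simp add: D_wt_def is_diag_def diag_edge_def Let_def)

lemma lp_split: "lattice_path n k c =
   (\<lambda>i. ((int (c i), int i - 1), (int (c i), int i))) ` {1..k}
   \<union> (\<lambda>(j,x). ((x, int j), (x - 1, int j))) `
       (SIGMA j:{0..k}. {int (cext n k c (Suc j))<..int (cext n k c j)})"
  unfolding lattice_path_def by auto

lemma inner:
  assumes "a \<le> l1" "b \<le> l0"
  shows "(\<Prod>x\<in>{a<..b::int}. if l1 < x \<and> x \<le> l0 then (u::'a::field) else 1) = u ^ nat (b - l1)"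
proof -
  have "(\<Prod>x\<in>{a<..b::int}. if l1 < x \<and> x \<le> l0 then u else 1)
      = (\<Prod>x\<in>{a<..b} \<inter> {x. l1 < x \<and> x \<le> l0}. u) * (\<Prod>x\<in>{a<..b} \<inter> - {x. l1 < x \<and> x \<le> l0}. 1)"
    by (rule prod.If_cases) simp
  also have "{a<..b} \<inter> {x. l1 < x \<and> x \<le> l0} = {l1<..b}" using assms by auto
  finally show ?thesis by simp
qed

lemma pwt_eq:
  assumes "\<forall>i. 1 \<le> i \<and> i \<le> k \<longrightarrow> C i \<le> lam i"
  shows "pwt n k lam \<alpha> \<beta> C = (\<Prod>i\<in>{1..k}. if C i = 0 then 1/\<beta> else 1)
     * (\<Prod>j\<in>{0..k}. (1/\<alpha>) ^ nat (int (cext n k C j) - int (cext n k lam (Suc j))))"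
proof -
  define g :: "(int \<times> int) \<times> (int \<times> int) \<Rightarrow> 'a" where "g e =
        (if fst (fst e) = fst (snd e) then (if fst (fst e) = 0 then 1 / \<beta> else 1)
        else if e \<in> lattice_path n k lam then 1 / \<alpha> else 1)" for e
  define s where "s i = ((int (C i), int i - 1), (int (C i), int i))" for i
  define w :: "nat \<times> int \<Rightarrow> (int \<times> int) \<times> (int \<times> int)"
    where "w = (\<lambda>(j,x). ((x, int j), (x - 1, int j)))"
  define I where "I = (SIGMA j:{0..k}. {int (cext n k C (Suc j))<..int (cext n k C j)})"
  have fI: "finite I" unfolding I_def by auto
  have "pwt n k lam \<alpha> \<beta> C = prod g (s ` {1..k} \<union> w ` I)"
    unfolding pwt_def g_def s_def w_def I_def lp_split ..
  also have "\<dots> = prod g (s ` {1..k}) * prod g (w ` I)"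
    by (rule prod.union_disjoint) (use fI in \<open>auto simp: s_def w_def\<close>)
  also have "prod g (s ` {1..k}) = (\<Prod>i\<in>{1..k}. if C i = 0 then 1/\<beta> else 1)"
    by (subst prod.reindex) (auto simp: inj_on_def s_def g_def)
  also have "prod g (w ` I) = prod (g \<circ> w) I"
    by (rule prod.reindex) (auto simp: inj_on_def w_def)
  also have "\<dots> = (\<Prod>j\<in>{0..k}. \<Prod>x\<in>{int (cext n k C (Suc j))<..int (cext n k C j)}. g (w (j,x)))"
    unfolding I_def by (subst prod.Sigma) auto
  also have "\<dots> = (\<Prod>j\<in>{0..k}. (1/\<alpha>) ^ nat (int (cext n k C j) - int (cext n k lam (Suc j))))"
  proof (rule prod.cong[OF refl])
    fix j assume j: "j \<in> {0..k}"
    have gw: "g (w (j,x)) = (if int (cext n k lam (Suc j)) < x \<and> x \<le> int (cext n k lam j) then 1/\<alpha> else 1)" for x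
      using j unfolding g_def w_def lattice_path_def by auto
    show "(\<Prod>x\<in>{int (cext n k C (Suc j))<..int (cext n k C j)}. g (w (j,x)))
       = (1/\<alpha>) ^ nat (int (cext n k C j) - int (cext n k lam (Suc j)))"
      unfolding gw
      by (rule inner) (use j assms in \<open>auto simp: cext_def\<close>)
  qed
  finally show ?thesis .
qed


theorem lemma2:
  fixes n k :: nat and lam C :: "nat \<Rightarrow> nat" and \<alpha> \<beta> :: "'a::field"
  assumes "1 \<le> k" and "k \<le> n"
    and "lam 1 \<le> n - k"
    and "\<forall>i. 1 \<le> i \<and> i < k \<longrightarrow> lam (Suc i) \<le> lam i"
    and "\<forall>i. 1 \<le> i \<and> i \<le> k \<longrightarrow> C i \<le> lam i"
  shows "((\<forall>i j. 1 \<le> i \<and> i < j \<and> j \<le> k \<longrightarrow>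
              set (Ppath k lam C i) \<inter> set (Ppath k lam C j) = {})
          \<longleftrightarrow> (\<forall>i. 1 \<le> i \<and> i < k \<longrightarrow> C (Suc i) \<le> C i))
       \<and> ((\<forall>i. 1 \<le> i \<and> i < k \<longrightarrow> C (Suc i) \<le> C i) \<longrightarrow>
           pwt n k lam \<alpha> \<beta> C
             = (1 / \<alpha>) ^ (n - k - lam 1) * (\<Prod>i = 1..k. path_wt k lam \<alpha> \<beta> (Ppath k lam C i)))"
proof -
  have Pe: "Ppath k lam C i = PP (lam i) (C i) i" if "1 \<le> i" "i \<le> k" for i
    using Ppath_eq[of i k C lam] that assms(5) by auto
  have part1: "(\<forall>i j. 1 \<le> i \<and> i < j \<and> j \<le> k \<longrightarrow>
              set (Ppath k lam C i) \<inter> set (Ppath k lam C j) = {})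
          \<longleftrightarrow> (\<forall>i. 1 \<le> i \<and> i < k \<longrightarrow> C (Suc i) \<le> C i)"
  proof
    assume a: "\<forall>i j. 1 \<le> i \<and> i < j \<and> j \<le> k \<longrightarrow>
              set (Ppath k lam C i) \<inter> set (Ppath k lam C j) = {}"
    show "\<forall>i. 1 \<le> i \<and> i < k \<longrightarrow> C (Suc i) \<le> C i"
    proof (intro allI impI)
      fix i assume i: "1 \<le> i \<and> i < k"
      have "set (PP (lam i) (C i) i) \<inter> set (PP (lam (Suc i)) (C (Suc i)) (Suc i)) = {}"
        using a[rule_format, of i "Suc i"] i Pe[of i] Pe[of "Suc i"] by auto
      then show "C (Suc i) \<le> C i"
        using disj_adj[of i "C (Suc i)" "lam (Suc i)" "lam i" "C i"] i assms(4,5) by auto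
    qed
  next
    assume a: "\<forall>i. 1 \<le> i \<and> i < k \<longrightarrow> C (Suc i) \<le> C i"
    show "\<forall>i j. 1 \<le> i \<and> i < j \<and> j \<le> k \<longrightarrow>
              set (Ppath k lam C i) \<inter> set (Ppath k lam C j) = {}"
    proof (intro allI impI)
      fix i j assume ij: "1 \<le> i \<and> i < j \<and> j \<le> k"
      show "set (Ppath k lam C i) \<inter> set (Ppath k lam C j) = {}"
      proof (cases "j = Suc i")
        case True
        then show ?thesis
          using disj_adj[of i "C (Suc i)" "lam (Suc i)" "lam i" "C i"] ij assms(4,5) a
            Pe[of i] Pe[of j] by auto
      next
        case False
        then show ?thesis using disj_far[of i j] ij Pe[of i] Pe[of j] by auto
      qed
    qed
  qed
  have part2: "pwt n k lam \<alpha> \<beta> C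
             = (1 / \<alpha>) ^ (n - k - lam 1) * (\<Prod>i = 1..k. path_wt k lam \<alpha> \<beta> (Ppath k lam C i))"
  proof -
    have pw: "path_wt k lam \<alpha> \<beta> (Ppath k lam C i) =
       (if C i = 0 then 1/\<beta> else 1) * (1/\<alpha>) ^ nat (int (cext n k C i) - int (cext n k lam (Suc i)))"
      if i: "i \<in> {1..k}" for i
    proof -
      have l: "lamx k lam (Suc i) = cext n k lam (Suc i)"
        using i by (auto simp: lamx_def cext_def)
      have c: "cext n k C i = C i" using i by (auto simp: cext_def)
      show ?thesis using i assms(5)
        by (simp add: Pe path_wt_PP D_wt_diag l c)
    qed
    have "pwt n k lam \<alpha> \<beta> C = (\<Prod>i\<in>{1..k}. if C i = 0 then 1/\<beta> else 1)
     * (\<Prod>j\<in>{0..k}. (1/\<alpha>) ^ nat (int (cext n k C j) - int (cext n k lam (Suc j))))"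
      by (rule pwt_eq) (use assms(5) in auto)
    also have "{0..k} = insert 0 {1..k}" by auto
    also have "(\<Prod>j\<in>insert 0 {1..k}. (1/\<alpha>) ^ nat (int (cext n k C j) - int (cext n k lam (Suc j))))
      = (1/\<alpha>) ^ (n - k - lam 1) * (\<Prod>j\<in>{1..k}. (1/\<alpha>) ^ nat (int (cext n k C j) - int (cext n k lam (Suc j))))"
    proof -
      have e: "nat (int (cext n k C 0) - int (cext n k lam (Suc 0))) = n - k - lam 1"
        using assms(1,3) by (simp add: cext_def)
      show ?thesis by (subst prod.insert) (auto simp: e)
    qed
    finally show ?thesis
      by (simp add: pw prod.distrib)
  qed
  show ?thesis using part1 part2 by blast
qed

end
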